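(* Let $f:\mathbb{R}^d\to\mathbb{R}$ be $(p,C)$-smooth with $p=q+\beta$, $q\in\mathbb{N}_0$, $\beta\in(0,1]$, let $A\ge1$, $K\in\mathbb{N}$, and let $\delta$, $u_{\mathbf{k}}$, $I$ and $P$ be as in the context. Let $\mathbf{r}\in I$ and $x\in[u_{\mathbf{r}},u_{\mathbf{r}}+\delta\cdot\mathbf{1})$. Then $P(x)=(Tf)_{q,u_{\mathbf{r}}}(x)$.
   Context: $(p,C)$-smooth: all partial derivatives of order $q$ exist and are $\beta$-Hölder with constant $C$. For a $q$ times differentiable $g$ and $u\in\mathbb{R}^d$, $(Tg)_{q,u}(x)=\sum_{j_1+\dots+j_d\le q}\frac{1}{j_1!\cdots j_d!}\frac{\partial^{j_1+\dots+j_d}g}{\partial (x^{(1)})^{j_1}\cdots\partial (x^{(d)})^{j_d}}(u)\,(x^{(1)}-u^{(1)})^{j_1}\cdots(x^{(d)}-u^{(d)})^{j_d}$ is the Taylor polynomial of degree $q$ around $u$. Let $\delta=2A/K$, $u_k=-A+k\cdot 2A/K$ ($k=0,\dots,K-1$), $I=\{0,\dots,K-1\}^d$, $u_{\mathbf{k}}=(u_{k^{(1)}},\dots,u_{k^{(d)}})$ for $\mathbf{k}\in I$. For $\mathbf{a},\mathbf{b}\in\mathbb{R}^d$, $\mathbf{a}\le\mathbf{b}$ means $a^{(l)}\le b^{(l)}$ for all $l$, and $\mathbf{a}<\mathbf{b}$ means $\mathbf{a}\le\mathbf{b}$ and $\mathbf{a}\ne\mathbf{b}$; $[\mathbf{a},\infty)=\prod_l[a^{(l)},\infty)$,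 $[\mathbf{a},\mathbf{b})=\prod_l[a^{(l)},b^{(l)})$, $\mathbf{1}=(1,\dots,1)$. Define $P_{\mathbf{0}}=(Tf)_{q,u_{\mathbf{0}}}$ and recursively $P_{\mathbf{k}}=\big(T(f-\sum_{\mathbf{l}\in I:u_{\mathbf{l}}<u_{\mathbf{k}}}P_{\mathbf{l}})\big)_{q,u_{\mathbf{k}}}$, and $P(x)=\sum_{\mathbf{k}\in I}P_{\mathbf{k}}(x)\,1_{[u_{\mathbf{k}},\infty)}(x)$. *)

theory Defs
  imports "HOL-Analysis.Analysis"
begin

text \<open>Points of R^d are vectors of type real^'d; the coordinates are indexed by a finite,
  linearly ordered type 'd (the order fixes the order of differentiation in mixed partials).\<close>

definition partial :: "'d::finite \<Rightarrow> (real^'d \<Rightarrow> real) \<Rightarrow> real^'d \<Rightarrow> real" where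
  "partial i g x = deriv (\<lambda>t. g (x + t *\<^sub>R axis i 1)) 0"

fun pdl :: "'d::finite list \<Rightarrow> (real^'d \<Rightarrow> real) \<Rightarrow> real^'d \<Rightarrow> real" where
  "pdl [] g = g"
| "pdl (i # is) g = partial i (pdl is g)"

definition dirs :: "('d::{finite,linorder} \<Rightarrow> nat) \<Rightarrow> 'd list" where
  "dirs j = concat (map (\<lambda>l. replicate (j l) l) (sorted_list_of_set (UNIV :: 'd set)))"

definition mpartial :: "('d::{finite,linorder} \<Rightarrow> nat) \<Rightarrow> (real^'d::{finite,linorder} \<Rightarrow> real) \<Rightarrow> real^'d::{finite,linorder} \<Rightarrow> real" where
  "mpartial j g = pdl (dirs j) g"

text \<open>(p,C)-smoothness with p = q + beta: all partial derivatives of order q exist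
  (so all lower order partials exist everywhere and are partially differentiable)
  and the order-q partials are beta-Hoelder with constant C.\<close>
definition pC_smooth :: "nat \<Rightarrow> real \<Rightarrow> real \<Rightarrow> (real^'d::finite \<Rightarrow> real) \<Rightarrow> bool" where
  "pC_smooth q \<beta> C f \<longleftrightarrow>
     (\<forall>ds::'d list. length ds < q \<longrightarrow>
        (\<forall>i x. (\<lambda>t. pdl ds f (x + t *\<^sub>R axis i 1)) differentiable (at 0))) \<and>
     (\<forall>ds::'d list. length ds = q \<longrightarrow>
        (\<forall>x z. \<bar>pdl ds f x - pdl ds f z\<bar> \<le> C * norm (x - z) powr \<beta>))"

definition taylor :: "nat \<Rightarrow> real^'d::{finite,linorder} \<Rightarrow> (real^'d::{finite,linorder} \<Rightarrow> real) \<Rightarrow> real^'d::{finite,linorder} \<Rightarrow> real" where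
  "taylor q u g x = (\<Sum>j\<in>{j::'d::{finite,linorder} \<Rightarrow> nat. (\<Sum>l\<in>UNIV. j l) \<le> q}.
      (1 / (\<Prod>l\<in>UNIV. fact (j l))) * mpartial j g u * (\<Prod>l\<in>UNIV. (x $ l - u $ l) ^ (j l)))"

definition grid1 :: "real \<Rightarrow> nat \<Rightarrow> nat \<Rightarrow> real" where
  "grid1 A K k = - A + real k * (2 * A / real K)"

definition gridpt :: "real \<Rightarrow> nat \<Rightarrow> ('d::finite \<Rightarrow> nat) \<Rightarrow> real^'d" where
  "gridpt A K k = (\<chi> l. grid1 A K (k l))"

definition gridI :: "nat \<Rightarrow> ('d::finite \<Rightarrow> nat) set" where
  "gridI K = {k. \<forall>l. k l < K}"

definition vle :: "real^'d \<Rightarrow> real^'d \<Rightarrow> bool" where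
  "vle a b \<longleftrightarrow> (\<forall>l. a $ l \<le> b $ l)"

definition vlt :: "real^'d \<Rightarrow> real^'d \<Rightarrow> bool" where
  "vlt a b \<longleftrightarrow> vle a b \<and> a \<noteq> b"

definition Ppiece :: "real \<Rightarrow> nat \<Rightarrow> (('d::finite \<Rightarrow> nat) \<Rightarrow> real^'d \<Rightarrow> real) \<Rightarrow> real^'d \<Rightarrow> real" where
  "Ppiece A K Pk x = (\<Sum>k\<in>gridI K. Pk k x * (if vle (gridpt A K k) x then 1 else 0))"

end

theory Submission
  imports Defs "HOL-Library.FuncSet"
begin

definition polyg :: "('a \<Rightarrow> real) \<Rightarrow> ('a \<Rightarrow> real^'d::finite) \<Rightarrow> ('a \<Rightarrow> 'd \<Rightarrow> nat) \<Rightarrow> 'a set \<Rightarrow> real^'d \<Rightarrow> real" where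
  "polyg c v e S y = (\<Sum>a\<in>S. c a * (\<Prod>l\<in>UNIV. (y$l - v a $ l) ^ (e a l)))"

lemma term_deriv:
  fixes y w :: "real^'d::finite" and n :: "'d \<Rightarrow> nat"
  shows "((\<lambda>t. \<Prod>l\<in>UNIV. ((y + t *\<^sub>R axis i 1)$l - w $ l) ^ (n l)) has_real_derivative
     real (n i) * (\<Prod>l\<in>UNIV. (y$l - w $ l) ^ (if l = i then n i - 1 else n l))) (at 0)"
proof -
  have e1: "(\<lambda>t. \<Prod>l\<in>UNIV. ((y + t *\<^sub>R axis i 1)$l - w $ l) ^ (n l)) =
     (\<lambda>t. (y$i + t - w$i) ^ n i * (\<Prod>l\<in>UNIV-{i}. (y$l - w $ l) ^ (n l)))"
    apply (rule ext)
    apply (subst prod.remove[of UNIV i], simp, simp)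
    apply (intro arg_cong2[where f="(*)"])
     apply (simp add: axis_def)
    apply (rule prod.cong, auto simp: axis_def)
    done
  have e2: "(\<Prod>l\<in>UNIV. (y$l - w $ l) ^ (if l = i then n i - 1 else n l)) =
     (y$i - w$i) ^ (n i - 1) * (\<Prod>l\<in>UNIV-{i}. (y$l - w $ l) ^ (n l))"
    apply (subst prod.remove[of UNIV i], simp, simp)
    apply (intro arg_cong2[where f="(*)"], simp)
    apply (rule prod.cong, auto)
    done
  have "((\<lambda>t. (y$i + t - w$i) ^ n i) has_real_derivative real (n i) * (y$i + 0 - w$i) ^ (n i - 1)) (at 0)"
    by (auto intro!: derivative_eq_intros)
  then show ?thesis unfolding e1 e2
    by (auto intro!: derivative_eq_intros simp: mult_ac)
qed

lemma polyg_deriv: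
  "((\<lambda>t. polyg c v e S (y + t *\<^sub>R axis i 1)) has_real_derivative
     polyg (\<lambda>a. c a * real (e a i)) v (\<lambda>a l. if l = i then e a i - 1 else e a l) S y) (at 0)"
  unfolding polyg_def
  apply (rule DERIV_sum)
  apply (rule DERIV_cmult[THEN DERIV_cong])
   apply (rule term_deriv)
  apply (simp add: mult_ac)
  done

definition fall :: "nat \<Rightarrow> nat \<Rightarrow> real" where
  "fall e k = (\<Prod>i<k. real (e - i))"

lemma fall_Suc: "fall e (Suc k) = fall e k * real (e - k)"
  by (simp add: fall_def)

lemma polyg_partial:
  "partial i (polyg c v e S) = polyg (\<lambda>a. c a * real (e a i)) v (\<lambda>a l. if l = i then e a i - 1 else e a l) S"
  unfolding partial_def by (rule ext, rule DERIV_imp_deriv, rule polyg_deriv)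

lemma polyg_pdl:
  "pdl ds (polyg c v e S) = polyg (\<lambda>a. c a * (\<Prod>l\<in>UNIV. fall (e a l) (count_list ds l))) v
      (\<lambda>a l. e a l - count_list ds l) S"
proof (induction ds)
  case Nil
  then show ?case by (simp add: fall_def)
next
  case (Cons i ds)
  have p: "(\<Prod>l\<in>UNIV. fall (e a l) (count_list (i#ds) l)) =
      (\<Prod>l\<in>UNIV. fall (e a l) (count_list ds l)) * real (e a i - count_list ds i)" for a
  proof -
    have "(\<Prod>l\<in>UNIV. fall (e a l) (count_list (i#ds) l)) = fall (e a i) (count_list (i#ds) i) * (\<Prod>l\<in>UNIV-{i}. fall (e a l) (count_list (i#ds) l))"
      by (subst prod.remove[of UNIV i], auto)
    also have "\<dots> = fall (e a i) (count_list ds i) * real (e a i - count_list ds i) * (\<Prod>l\<in>UNIV-{i}. fall (e a l) (count_list ds l))"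
      by (auto simp: fall_Suc intro!: prod.cong)
    also have "\<dots> = (\<Prod>l\<in>UNIV. fall (e a l) (count_list ds l)) * real (e a i - count_list ds i)"
      by (subst prod.remove[of UNIV i], auto)
    finally show ?thesis .
  qed
  have q: "(if l = i then e a i - count_list ds i - 1 else e a l - count_list ds l) = e a l - count_list (i # ds) l" for a l
    by auto
  show ?case
    unfolding pdl.simps Cons polyg_partial
    unfolding polyg_def
    apply (rule ext, rule sum.cong[OF refl])
    apply (simp only: p q mult_ac)
    done
qed

lemma fall_binom: "fall e k = fact k * real (e choose k)"
proof (induction k)
  case 0 then show ?case by (simp add: fall_def)
next
  case (Suc k)
  have n: "Suc k * (e choose Suc k) = (e - k) * (e choose k)"
    by (metis binomial_absorption binomial_absorb_comp)
  have "real (Suc k) * real (e choose Suc k) = real (e - k) * real (e choose k)"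
    using n by (metis of_nat_mult)
  then show ?case using Suc by (simp add: fall_Suc)
qed

lemma finite_J: "finite {j::'d::finite \<Rightarrow> nat. (\<Sum>l\<in>UNIV. j l) \<le> q}"
proof (rule finite_subset)
  show "{j::'d::finite \<Rightarrow> nat. (\<Sum>l\<in>UNIV. j l) \<le> q} \<subseteq> PiE UNIV (\<lambda>_. {..q})"
  proof
    fix j :: "'d \<Rightarrow> nat" assume "j \<in> {j. (\<Sum>l\<in>UNIV. j l) \<le> q}"
    then have "j l \<le> q" for l using member_le_sum[of l UNIV j] by auto
    then show "j \<in> PiE UNIV (\<lambda>_. {..q})" by auto
  qed
  show "finite (PiE (UNIV::'d set) (\<lambda>_. {..q}))" by (rule finite_PiE) auto
qed

lemma sum_prod_bound:
  fixes h :: "'d::finite \<Rightarrow> nat \<Rightarrow> real"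
  assumes h0: "\<And>l k. k > e l \<Longrightarrow> h l k = 0" and he: "(\<Sum>l\<in>UNIV. e l) \<le> q"
  shows "(\<Sum>j\<in>{j::'d\<Rightarrow>nat. (\<Sum>l\<in>UNIV. j l) \<le> q}. \<Prod>l\<in>UNIV. h l (j l)) = (\<Prod>l\<in>UNIV. \<Sum>k\<le>e l. h l k)"
proof -
  have "(\<Prod>l\<in>UNIV. \<Sum>k\<le>e l. h l k) = (\<Sum>g\<in>PiE UNIV (\<lambda>l. {..e l}). \<Prod>l\<in>UNIV. h l (g l))"
    by (rule prod_sum_PiE) auto
  also have "\<dots> = (\<Sum>j\<in>{j::'d\<Rightarrow>nat. (\<Sum>l\<in>UNIV. j l) \<le> q}. \<Prod>l\<in>UNIV. h l (j l))"
  proof (rule sum.mono_neutral_left[OF finite_J])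
    show "PiE UNIV (\<lambda>l. {..e l}) \<subseteq> {j::'d\<Rightarrow>nat. (\<Sum>l\<in>UNIV. j l) \<le> q}"
    proof
      fix j assume "j \<in> PiE (UNIV::'d set) (\<lambda>l. {..e l})"
      then have "j l \<le> e l" for l by auto
      then have "(\<Sum>l\<in>UNIV. j l) \<le> (\<Sum>l\<in>UNIV. e l)" by (intro sum_mono) auto
      then show "j \<in> {j::'d\<Rightarrow>nat. (\<Sum>l\<in>UNIV. j l) \<le> q}" using he by auto
    qed
    show "\<forall>j\<in>{j::'d\<Rightarrow>nat. (\<Sum>l\<in>UNIV. j l) \<le> q} - PiE UNIV (\<lambda>l. {..e l}). (\<Prod>l\<in>UNIV. h l (j l)) = 0"
    proof
      fix j assume "j \<in> {j::'d\<Rightarrow>nat. (\<Sum>l\<in>UNIV. j l) \<le> q} - PiE UNIV (\<lambda>l. {..e l})"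
      then obtain l where "j l > e l" by (auto simp: PiE_def Pi_def not_le)
      then have "h l (j l) = 0" by (rule h0)
      then show "(\<Prod>l\<in>UNIV. h l (j l)) = 0" by (intro prod_zero) auto
    qed
  qed
  finally show ?thesis by simp
qed

lemma count_rep: "count_list (replicate n x) y = (if x = y then n else 0)"
  by (induction n) auto

lemma count_dirs: "count_list (dirs j) l = j l"
  unfolding dirs_def count_list_concat map_map
  by (simp add: sum_list_distinct_conv_sum_set o_def count_rep)

lemma length_dirs: "length (dirs j) = (\<Sum>l\<in>UNIV. j l)"
  unfolding dirs_def length_concat map_map
  by (simp add: sum_list_distinct_conv_sum_set o_def)

lemma mpartial_polyg:
  "mpartial j (polyg c v e S) y = (\<Sum>a\<in>S. c a * (\<Prod>l\<in>UNIV. fall (e a l) (j l)) *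
      (\<Prod>l\<in>UNIV. (y$l - v a $ l) ^ (e a l - j l)))"
  unfolding mpartial_def polyg_pdl count_dirs polyg_def by simp

lemma binom_h:
  fixes x u w :: real
  shows "(\<Sum>k\<le>n. fall n k / fact k * (u - w) ^ (n - k) * (x - u) ^ k) = (x - w) ^ n"
proof -
  have "(x - w) ^ n = ((x - u) + (u - w)) ^ n" by simp
  also have "\<dots> = (\<Sum>k\<le>n. real (n choose k) * (x - u) ^ k * (u - w) ^ (n - k))"
    by (rule binomial_ring)
  also have "\<dots> = (\<Sum>k\<le>n. fall n k / fact k * (u - w) ^ (n - k) * (x - u) ^ k)"
    by (rule sum.cong, auto simp: fall_binom)
  finally show ?thesis by simp
qed

lemma taylor_polyg:
  fixes u x :: "real^'d::{finite,linorder}"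
  assumes fin: "finite S" and deg: "\<forall>a\<in>S. (\<Sum>l\<in>UNIV. e a l) \<le> q"
  shows "taylor q u (polyg c v e S) x = polyg c v e S x"
proof -
  define h where "h a l k = fall (e a l) k / fact k * (u$l - v a $ l) ^ (e a l - k) * (x$l - u$l) ^ k" for a l k
  let ?J = "{j::'d \<Rightarrow> nat. (\<Sum>l\<in>UNIV. j l) \<le> q}"
  have step: "(1 / (\<Prod>l\<in>UNIV. fact (j l))) * mpartial j (polyg c v e S) u * (\<Prod>l\<in>UNIV. (x $ l - u $ l) ^ (j l))
     = (\<Sum>a\<in>S. c a * (\<Prod>l\<in>UNIV. h a l (j l)))" for j
  proof -
    have "(\<Prod>l\<in>UNIV. h a l (j l)) = (\<Prod>l\<in>UNIV. fall (e a l) (j l)) / (\<Prod>l\<in>UNIV. fact (j l)) *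
        (\<Prod>l\<in>UNIV. (u$l - v a $ l) ^ (e a l - j l)) * (\<Prod>l\<in>UNIV. (x $ l - u $ l) ^ (j l))" for a
      unfolding h_def prod.distrib prod_dividef by simp
    then show ?thesis
      unfolding mpartial_polyg sum_distrib_left sum_distrib_right
      by (intro sum.cong refl) simp
  qed
  have "taylor q u (polyg c v e S) x = (\<Sum>j\<in>?J. \<Sum>a\<in>S. c a * (\<Prod>l\<in>UNIV. h a l (j l)))"
    unfolding taylor_def using step by simp
  also have "\<dots> = (\<Sum>a\<in>S. c a * (\<Sum>j\<in>?J. \<Prod>l\<in>UNIV. h a l (j l)))"
    by (subst sum.swap) (simp add: sum_distrib_left)
  also have "\<dots> = (\<Sum>a\<in>S. c a * (\<Prod>l\<in>UNIV. \<Sum>k\<le>e a l. h a l k))"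
  proof (intro sum.cong refl arg_cong2[where f="(*)"])
    fix a assume "a \<in> S"
    show "(\<Sum>j\<in>?J. \<Prod>l\<in>UNIV. h a l (j l)) = (\<Prod>l\<in>UNIV. \<Sum>k\<le>e a l. h a l k)"
      by (rule sum_prod_bound) (use deg \<open>a \<in> S\<close> in \<open>auto simp: h_def fall_binom\<close>)
  qed
  also have "\<dots> = polyg c v e S x"
    unfolding polyg_def h_def binom_h by simp
  finally show ?thesis .
qed

lemma pdl_diff:
  fixes f :: "real^'d::finite \<Rightarrow> real"
  assumes hf: "\<forall>ds::'d list. length ds < q \<longrightarrow>
        (\<forall>i x. (\<lambda>t. pdl ds f (x + t *\<^sub>R axis i 1)) differentiable (at 0))"
  shows "length ds \<le> q \<Longrightarrow> pdl ds (\<lambda>y. f y - polyg c v e S y) = (\<lambda>y. pdl ds f y - pdl ds (polyg c v e S) y)"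
proof (induction ds)
  case Nil
  then show ?case by simp
next
  case (Cons i ds)
  then have IH: "pdl ds (\<lambda>y. f y - polyg c v e S y) = (\<lambda>y. pdl ds f y - pdl ds (polyg c v e S) y)" by simp
  have lt: "length ds < q" using Cons.prems by simp
  show ?case
  proof (simp only: pdl.simps IH partial_def, rule ext)
    fix y
    have d1: "((\<lambda>t. pdl ds f (y + t *\<^sub>R axis i 1)) has_real_derivative
       deriv (\<lambda>t. pdl ds f (y + t *\<^sub>R axis i 1)) 0) (at 0)"
      using hf lt DERIV_deriv_iff_real_differentiable by blast
    have d2: "((\<lambda>t. pdl ds (polyg c v e S) (y + t *\<^sub>R axis i 1)) has_real_derivative
       deriv (\<lambda>t. pdl ds (polyg c v e S) (y + t *\<^sub>R axis i 1)) 0) (at 0)"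
      unfolding polyg_pdl by (rule DERIV_imp_deriv[THEN ssubst], rule polyg_deriv, rule polyg_deriv)
    show "deriv (\<lambda>t. pdl ds f (y + t *\<^sub>R axis i 1) - pdl ds (polyg c v e S) (y + t *\<^sub>R axis i 1)) 0 =
        deriv (\<lambda>t. pdl ds f (y + t *\<^sub>R axis i 1)) 0 - deriv (\<lambda>t. pdl ds (polyg c v e S) (y + t *\<^sub>R axis i 1)) 0"
      by (rule DERIV_imp_deriv, rule DERIV_diff[OF d1 d2])
  qed
qed

lemma taylor_diff:
  fixes f :: "real^'d::{finite,linorder} \<Rightarrow> real"
  assumes hf: "pC_smooth q \<beta> C f"
  shows "taylor q u (\<lambda>y. f y - polyg c v e S y) x = taylor q u f x - taylor q u (polyg c v e S) x"
proof -
  have hf1: "\<forall>ds::'d list. length ds < q \<longrightarrow>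
        (\<forall>i x. (\<lambda>t. pdl ds f (x + t *\<^sub>R axis i 1)) differentiable (at 0))"
    using hf unfolding pC_smooth_def by blast
  have "mpartial j (\<lambda>y. f y - polyg c v e S y) u = mpartial j f u - mpartial j (polyg c v e S) u"
    if "(\<Sum>l\<in>UNIV. j l) \<le> q" for j
    unfolding mpartial_def using pdl_diff[OF hf1, of "dirs j"] that length_dirs[of j] by metis
  then show ?thesis
    unfolding taylor_def sum_subtractf[symmetric]
    by (intro sum.cong refl) (simp add: left_diff_distrib right_diff_distrib)
qed

lemma finite_gridI: "finite (gridI K :: ('d::finite \<Rightarrow> nat) set)"
proof (rule finite_subset)
  show "gridI K \<subseteq> PiE (UNIV::'d set) (\<lambda>_. {..<K})" by (auto simp: gridI_def)
  show "finite (PiE (UNIV::'d set) (\<lambda>_. {..<K}))" by (rule finite_PiE) auto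
qed

lemma grid1_le_iff:
  assumes "A > 0" "K \<ge> 1"
  shows "grid1 A K a \<le> grid1 A K b \<longleftrightarrow> a \<le> b"
proof -
  have c: "2 * A / real K > 0" using assms by simp
  have "grid1 A K a \<le> grid1 A K b \<longleftrightarrow> real a * (2 * A / real K) \<le> real b * (2 * A / real K)"
    unfolding grid1_def by linarith
  also have "\<dots> \<longleftrightarrow> a \<le> b" using mult_le_cancel_right_pos[OF c] by simp
  finally show ?thesis .
qed

theorem lemma6:
  fixes f :: "real^'d::{finite,linorder} \<Rightarrow> real"
    and q :: nat and p \<beta> C A :: real and K :: nat
    and Pk :: "('d::{finite,linorder} \<Rightarrow> nat) \<Rightarrow> real^'d::{finite,linorder} \<Rightarrow> real"
    and r :: "'d::{finite,linorder} \<Rightarrow> nat" and x :: "real^'d::{finite,linorder}"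
  assumes hp: "p = real q + \<beta>" and h\<beta>: "0 < \<beta>" "\<beta> \<le> 1"
    and hf: "pC_smooth q \<beta> C f"
    and hA: "A \<ge> 1" and hK: "K \<ge> 1"
    and hP: "\<forall>k\<in>gridI K. Pk k = taylor q (gridpt A K k)
               (\<lambda>y. f y - (\<Sum>l\<in>{l\<in>gridI K. vlt (gridpt A K l) (gridpt A K k)}. Pk l y))"
    and hr: "r \<in> gridI K"
    and hx: "\<forall>l. gridpt A K r $ l \<le> x $ l \<and> x $ l < gridpt A K r $ l + 2 * A / real K"
  shows "Ppiece A K Pk x = taylor q (gridpt A K r) f x"
proof -
  define u where "u = (gridpt A K :: ('d \<Rightarrow> nat) \<Rightarrow> (real, 'd) vec)"
  define L where "L (k::'d \<Rightarrow> nat) = {l\<in>gridI K. vlt (u l) (u k)}" for k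
  define J where "J = {j::'d \<Rightarrow> nat. (\<Sum>l\<in>UNIV. j l) \<le> q}"
  define cf where "cf k j = 1 / (\<Prod>l\<in>UNIV. fact (j l)) *
     mpartial j (\<lambda>y. f y - (\<Sum>l\<in>L k. Pk l y)) (u k)" for k j
  have A0: "A > 0" using hA by simp
  have gle: "grid1 A K a \<le> grid1 A K b \<longleftrightarrow> a \<le> b" for a b using grid1_le_iff[OF A0 hK] .
  have u_comp: "u k $ l = grid1 A K (k l)" for k l by (simp add: u_def gridpt_def)
  have u_inj: "u k = u k' \<Longrightarrow> k = k'" for k k'
  proof
    fix l assume "u k = u k'"
    then have "grid1 A K (k l) = grid1 A K (k' l)" by (metis u_comp)
    then show "k l = k' l" using gle by (metis order_antisym order_refl)
  qed
  have Pk_poly: "Pk k = polyg (cf k) (\<lambda>_. u k) (\<lambda>j. j) J" if "k \<in> gridI K" for k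
    using hP that unfolding polyg_def taylor_def cf_def L_def J_def u_def
    by (auto intro!: ext sum.cong simp: mult_ac)
  have finL: "finite (L k)" for k unfolding L_def by (rule finite_subset[OF _ finite_gridI]) auto
  have finJ: "finite J" unfolding J_def by (rule finite_J)
  have S_poly: "(\<Sum>l\<in>L r. Pk l y) = polyg (\<lambda>(l,j). cf l j) (\<lambda>(l,j). u l) (\<lambda>(l,j). j) (L r \<times> J) y" for y
  proof -
    have "(\<Sum>l\<in>L r. Pk l y) = (\<Sum>l\<in>L r. polyg (cf l) (\<lambda>_. u l) (\<lambda>j. j) J y)"
      by (intro sum.cong refl) (simp add: Pk_poly L_def)
    also have "\<dots> = polyg (\<lambda>(l,j). cf l j) (\<lambda>(l,j). u l) (\<lambda>(l,j). j) (L r \<times> J) y"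
      unfolding polyg_def by (subst sum.cartesian_product) (simp add: case_prod_beta)
    finally show ?thesis .
  qed
  have Pr: "Pk r x = taylor q (u r) f x - (\<Sum>l\<in>L r. Pk l x)"
  proof -
    have "Pk r x = taylor q (u r) (\<lambda>y. f y - polyg (\<lambda>(l,j). cf l j) (\<lambda>(l,j). u l) (\<lambda>(l,j). j) (L r \<times> J) y) x"
      using hP hr S_poly unfolding L_def u_def by simp
    also have "\<dots> = taylor q (u r) f x - taylor q (u r) (polyg (\<lambda>(l,j). cf l j) (\<lambda>(l,j). u l) (\<lambda>(l,j). j) (L r \<times> J)) x"
      by (rule taylor_diff[OF hf])
    also have "taylor q (u r) (polyg (\<lambda>(l,j). cf l j) (\<lambda>(l,j). u l) (\<lambda>(l,j). j) (L r \<times> J)) x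
       = polyg (\<lambda>(l,j). cf l j) (\<lambda>(l,j). u l) (\<lambda>(l,j). j) (L r \<times> J) x"
      by (rule taylor_polyg) (use finL finJ in \<open>auto simp: J_def\<close>)
    finally show ?thesis using S_poly by simp
  qed
  have vle_iff: "vle (u k) x \<longleftrightarrow> (\<forall>l. k l \<le> r l)" for k
  proof
    assume h: "vle (u k) x"
    show "\<forall>l. k l \<le> r l"
    proof (rule ccontr)
      assume "\<not> (\<forall>l. k l \<le> r l)"
      then obtain l where "Suc (r l) \<le> k l" by (auto simp: not_le Suc_le_eq)
      then have "grid1 A K (Suc (r l)) \<le> grid1 A K (k l)" using gle by blast
      moreover have "grid1 A K (Suc (r l)) = grid1 A K (r l) + 2 * A / real K"
        by (simp add: grid1_def algebra_simps add_divide_distrib)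
      moreover have "grid1 A K (k l) \<le> x $ l" using h by (simp add: vle_def u_comp)
      ultimately show False using hx[rule_format, of l] by (simp add: u_def[symmetric] u_comp)
    qed
  next
    assume h: "\<forall>l. k l \<le> r l"
    show "vle (u k) x" unfolding vle_def
    proof
      fix l
      have "u k $ l \<le> u r $ l" using h gle by (simp add: u_comp)
      then show "u k $ l \<le> x $ l" using hx by (simp add: u_def[symmetric]) (meson order_trans)
    qed
  qed
  have vlt_iff: "vlt (u k) (u r) \<longleftrightarrow> (\<forall>l. k l \<le> r l) \<and> k \<noteq> r" for k
    unfolding vlt_def vle_def using u_inj gle by (auto simp: u_comp)
  have set_eq: "{k\<in>gridI K. vle (u k) x} = insert r (L r)"
    using hr unfolding L_def vle_iff vlt_iff by auto
  have rL: "r \<notin> L r" unfolding L_def vlt_iff by simp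
  have "Ppiece A K Pk x = (\<Sum>k\<in>gridI K. if vle (u k) x then Pk k x else 0)"
    unfolding Ppiece_def u_def by (intro sum.cong refl) simp
  also have "\<dots> = (\<Sum>k\<in>{k\<in>gridI K. vle (u k) x}. Pk k x)"
    by (rule sum.inter_filter[symmetric, OF finite_gridI])
  also have "\<dots> = Pk r x + (\<Sum>l\<in>L r. Pk l x)"
    unfolding set_eq using finL rL by simp
  also have "\<dots> = taylor q (u r) f x" using Pr by simp
  finally show ?thesis unfolding u_def .
qed

end
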